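(* Let $q$ be a prime, let $m \geq 1$ be an integer, and let $u$ be an integer with $0 \leq u \leq q-2$. Let $\mathcal{RM}_q(u,m) \subseteq \mathbb{F}_q^{q^m}$ be the code consisting of the vectors $\left(f(\alpha)\right)_{\alpha \in \mathbb{F}_q^m}$ (coordinates indexed by the points of $\mathbb{F}_q^m$), where $f$ ranges over all polynomials in $\mathbb{F}_q[x_1,\ldots,x_m]$ of total degree at most $u$, and let $\mathcal{RM}^{\perp}_q(u,m)$ be its dual code with respect to the standard bilinear form. Then for any $u+2$ distinct points of $\mathbb{F}_q^m$ lying on a common affine line, i.e. points $\mathbf{p}_1, \mathbf{p}_1 + t_1\mathbf{h}, \ldots, \mathbf{p}_1 + t_{u+1}\mathbf{h}$ with $\mathbf{p}_1 \in \mathbb{F}_q^m$, $\mathbf{h} \in \mathbb{F}_q^m\setminus\{\mathbf{0}\}$ and $t_1,\ldots,t_{u+1}$ distinct nonzero elements of $\mathbb{F}_q$, there exists a codeword of $\mathcal{RM}^{\perp}_q(u,m)$ of minimum nonzero Hamming weight whose support is exactly this set of $u+2$ points.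
   Context: The support of a vector is the set of coordinates where it is nonzero, identified with a set of points of $\mathbb{F}_q^m$. For $u \leq q-2$ the minimum nonzero Hamming weight of $\mathcal{RM}^{\perp}_q(u,m)$ equals $u+2$. *)

theory Defs
  imports Main "HOL-Computational_Algebra.Primes"
begin

text \<open>Points of F_q^m are functions 'm \<Rightarrow> 'a with 'a a finite field of prime order q
  and 'm a finite index type with CARD('m) = m. Words of length q^m are functions
  from points to 'a.\<close>

definition exponents :: "nat \<Rightarrow> ('m::finite \<Rightarrow> nat) set" where
  "exponents u = {e. (\<Sum>i\<in>UNIV. e i) \<le> u}"

definition RM :: "nat \<Rightarrow> (('m::finite \<Rightarrow> 'a::field) \<Rightarrow> 'a) set" where
  "RM u = {w. \<exists>c :: ('m \<Rightarrow> nat) \<Rightarrow> 'a.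
      \<forall>x. w x = (\<Sum>e\<in>exponents u. c e * (\<Prod>i\<in>UNIV. x i ^ e i))}"

definition dual_code :: "(('m::finite \<Rightarrow> 'a::{field,finite}) \<Rightarrow> 'a) set \<Rightarrow> (('m \<Rightarrow> 'a) \<Rightarrow> 'a) set" where
  "dual_code C = {v. \<forall>w\<in>C. (\<Sum>x\<in>UNIV. v x * w x) = 0}"

definition supp :: "('b \<Rightarrow> 'a::zero) \<Rightarrow> 'b set" where
  "supp v = {x. v x \<noteq> 0}"

definition hweight :: "('b \<Rightarrow> 'a::zero) \<Rightarrow> nat" where
  "hweight v = card (supp v)"

definition min_weight :: "('b \<Rightarrow> 'a::zero) set \<Rightarrow> nat" where
  "min_weight C = Min {hweight v | v. v \<in> C \<and> v \<noteq> (\<lambda>_. 0)}"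

end

theory Submission imports Defs "HOL-Computational_Algebra.Polynomial" "HOL-Library.FuncSet" begin

definition mnm :: "('m::finite \<Rightarrow> nat) \<Rightarrow> ('m \<Rightarrow> 'a::field) \<Rightarrow> 'a" where
  "mnm e x = (\<Prod>i\<in>UNIV. x i ^ e i)"

lemma finite_exponents: "finite (exponents d :: ('m::finite \<Rightarrow> nat) set)"
proof -
  have "exponents d \<subseteq> PiE (UNIV::'m set) (\<lambda>_. {..d})"
  proof
    fix e :: "'m \<Rightarrow> nat" assume "e \<in> exponents d"
    hence "e i \<le> d" for i
      using member_le_sum[of i UNIV e] by (auto simp: exponents_def)
    thus "e \<in> PiE UNIV (\<lambda>_. {..d})" by (auto simp: PiE_def Pi_def extensional_def)
  qed
  thus ?thesis by (rule finite_subset) (auto intro: finite_PiE)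
qed

lemma RM_iff: "f \<in> RM d \<longleftrightarrow> (\<exists>c. \<forall>x. f x = (\<Sum>e\<in>exponents d. c e * mnm e x))"
  by (simp add: RM_def mnm_def)

lemma exponents_mono: "d \<le> d' \<Longrightarrow> exponents d \<subseteq> exponents d'"
  by (auto simp: exponents_def)

lemma RM_mono:
  assumes "d \<le> d'" "f \<in> RM d"
  shows "f \<in> (RM d' :: (('m::finite \<Rightarrow> 'a::field) \<Rightarrow> 'a) set)"
proof -
  obtain c where c: "\<forall>x. f x = (\<Sum>e\<in>exponents d. c e * mnm e x)" using assms RM_iff by blast
  define c' where "c' e = (if e \<in> exponents d then c e else 0)" for e
  have "f x = (\<Sum>e\<in>exponents d'. c' e * mnm e x)" for x
    unfolding c[rule_format]
    by (rule sum.mono_neutral_cong_left) (use finite_exponents exponents_mono[OF assms(1)] in \<open>auto simp: c'_def\<close>)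
  thus ?thesis by (auto simp: RM_iff)
qed

lemma RM_const: "(\<lambda>x. a) \<in> (RM 0 :: (('m::finite \<Rightarrow> 'a::field) \<Rightarrow> 'a) set)"
proof -
  have E: "exponents 0 = {(\<lambda>_. 0) :: 'm \<Rightarrow> nat}" by (auto simp: exponents_def)
  show ?thesis unfolding RM_iff E by (intro exI[of _ "\<lambda>_. a"]) (simp add: mnm_def)
qed

lemma RM_add:
  assumes "f \<in> RM d" "g \<in> RM d"
  shows "(\<lambda>x. f x + g x) \<in> (RM d :: (('m::finite \<Rightarrow> 'a::field) \<Rightarrow> 'a) set)"
proof -
  obtain c where c: "\<forall>x. f x = (\<Sum>e\<in>exponents d. c e * mnm e x)" using assms RM_iff by blast
  obtain c' where c': "\<forall>x. g x = (\<Sum>e\<in>exponents d. c' e * mnm e x)" using assms RM_iff by blast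
  show ?thesis unfolding RM_iff
    by (intro exI[of _ "\<lambda>e. c e + c' e"]) (simp add: c c' sum.distrib distrib_right)
qed

lemma RM_smult:
  assumes "f \<in> RM d"
  shows "(\<lambda>x. a * f x) \<in> (RM d :: (('m::finite \<Rightarrow> 'a::field) \<Rightarrow> 'a) set)"
proof -
  obtain c where c: "\<forall>x. f x = (\<Sum>e\<in>exponents d. c e * mnm e x)" using assms RM_iff by blast
  show ?thesis unfolding RM_iff
    by (intro exI[of _ "\<lambda>e. a * c e"]) (simp add: c sum_distrib_left mult.assoc)
qed

lemma sum_upd: "sum (f(i:=v)) (UNIV::'m::finite set) + f i = sum f UNIV + (v::nat)"
proof -
  have "sum (f(i:=v)) UNIV = (f(i:=v)) i + sum (f(i:=v)) (UNIV - {i})" by (rule sum.remove) auto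
  moreover have "sum f UNIV = f i + sum f (UNIV - {i})" by (rule sum.remove) auto
  moreover have "sum (f(i:=v)) (UNIV - {i}) = sum f (UNIV - {i})" by (intro sum.cong refl) auto
  ultimately show ?thesis by simp
qed

lemma mnm_shift: "mnm (e(i := Suc (e i))) x = mnm e x * (x i :: 'a::field)"
proof -
  have "mnm (e(i := Suc (e i))) x = (\<Prod>j\<in>UNIV. x j ^ e j * (if j = i then x i else 1))"
    unfolding mnm_def by (intro prod.cong) auto
  also have "\<dots> = mnm e x * x i" by (simp add: prod.distrib mnm_def)
  finally show ?thesis .
qed

lemma RM_mult_var:
  assumes "f \<in> RM d"
  shows "(\<lambda>x. f x * x i) \<in> (RM (Suc d) :: (('m::finite \<Rightarrow> 'a::field) \<Rightarrow> 'a) set)"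
proof -
  obtain c where c: "\<forall>x. f x = (\<Sum>e\<in>exponents d. c e * mnm e x)" using assms RM_iff by blast
  define sh :: "('m \<Rightarrow> nat) \<Rightarrow> ('m \<Rightarrow> nat)" where "sh e = e(i := Suc (e i))" for e
  define c' where "c' e' = (if 0 < e' i \<and> e'(i := e' i - 1) \<in> exponents d then c (e'(i := e' i - 1)) else 0)" for e'
  have inj: "inj sh" unfolding sh_def inj_def by (metis fun_upd_same fun_upd_triv fun_upd_upd nat.inject)
  have shpre: "(sh e)(i := sh e i - 1) = e" for e by (simp add: sh_def)
  have sub: "sh ` exponents d \<subseteq> exponents (Suc d)"
  proof
    fix e' assume "e' \<in> sh ` exponents d"
    then obtain e where "e \<in> exponents d" "e' = sh e" by auto
    moreover have "sum (sh e) UNIV = Suc (sum e UNIV)" using sum_upd[of e i "Suc (e i)"] by (simp add: sh_def)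
    ultimately show "e' \<in> exponents (Suc d)" by (simp add: exponents_def)
  qed
  have "f x * x i = (\<Sum>e\<in>exponents (Suc d). c' e * mnm e x)" for x
  proof -
    have "f x * x i = (\<Sum>e\<in>exponents d. c' (sh e) * mnm (sh e) x)"
      unfolding c[rule_format] sum_distrib_right
      by (intro sum.cong refl) (simp add: c'_def shpre sh_def mnm_shift mult.assoc)
    also have "\<dots> = (\<Sum>e'\<in>sh ` exponents d. c' e' * mnm e' x)"
      by (subst sum.reindex) (use inj in \<open>auto intro: inj_on_subset\<close>)
    also have "\<dots> = (\<Sum>e\<in>exponents (Suc d). c' e * mnm e x)"
    proof (rule sum.mono_neutral_left[OF finite_exponents sub], rule ballI)
      fix e' assume e': "e' \<in> exponents (Suc d) - sh ` exponents d"
      show "c' e' * mnm e' x = 0"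
      proof (cases "0 < e' i \<and> e'(i := e' i - 1) \<in> exponents d")
        case True
        have "sh (e'(i := e' i - 1)) = e'" using True by (auto simp: sh_def)
        thus ?thesis using True e' by (metis DiffD2 image_eqI)
      next
        case False thus ?thesis by (auto simp: c'_def)
      qed
    qed
    finally show ?thesis .
  qed
  thus ?thesis by (auto simp: RM_iff)
qed
lemma lagrange_zero:
  fixes T :: "'a::field set" and g :: "'a poly"
  assumes fin: "finite T" and deg: "degree g + 2 \<le> card T"
  shows "(\<Sum>s\<in>T. poly g s / (\<Prod>l\<in>T-{s}. s - l)) = 0"
proof -
  define P where "P s = (\<Prod>l\<in>T-{s}. [:-l,1:])" for s
  define R where "R = (\<Sum>s\<in>T. smult (poly g s / (\<Prod>l\<in>T-{s}. s - l)) (P s))"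
  have Pev: "poly (P s) k = (\<Prod>l\<in>T-{s}. k - l)" for s k by (simp add: P_def poly_prod)
  have Pdeg: "degree (P s) = card T - 1" if "s \<in> T" for s
    unfolding P_def using that fin by (subst degree_prod_eq_sum_degree) auto
  have Plc: "coeff (P s) (card T - 1) = 1" if "s \<in> T" for s
  proof -
    have "lead_coeff (P s) = 1" unfolding P_def by (simp add: lead_coeff_prod)
    thus ?thesis using Pdeg[OF that] by simp
  qed
  have degR: "degree R \<le> card T - 1"
    unfolding R_def
    by (intro degree_sum_le fin) (use Pdeg degree_smult_le order.trans in metis)
  have evR: "poly R k = poly g k" if k: "k \<in> T" for k
  proof -
    have D: "(\<Prod>l\<in>T-{k}. k - l) \<noteq> 0" using fin by auto
    have "poly R k = (\<Sum>s\<in>T. poly g s / (\<Prod>l\<in>T-{s}. s - l) * (\<Prod>l\<in>T-{s}. k - l))"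
      by (simp add: R_def poly_sum Pev)
    also have "\<dots> = poly g k / (\<Prod>l\<in>T-{k}. k - l) * (\<Prod>l\<in>T-{k}. k - l)
        + (\<Sum>s\<in>T-{k}. poly g s / (\<Prod>l\<in>T-{s}. s - l) * (\<Prod>l\<in>T-{s}. k - l))"
      using fin k by (simp add: sum.remove)
    also have "(\<Sum>s\<in>T-{k}. poly g s / (\<Prod>l\<in>T-{s}. s - l) * (\<Prod>l\<in>T-{s}. k - l)) = 0"
      using fin k by (intro sum.neutral ballI) (auto intro!: prod_zero)
    finally show ?thesis using D by simp
  qed
  have "R = g"
    by (rule poly_eqI_degree[of T]) (use evR degR deg fin in auto)
  hence "coeff R (card T - 1) = 0" using deg by (simp add: coeff_eq_0)
  moreover have "coeff R (card T - 1) = (\<Sum>s\<in>T. poly g s / (\<Prod>l\<in>T-{s}. s - l))"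
    unfolding R_def coeff_sum coeff_smult by (intro sum.cong refl) (use Plc in auto)
  ultimately show ?thesis by simp
qed

lemma RM_lin:
  assumes "f \<in> RM d"
  shows "(\<lambda>x. f x * (x i - a)) \<in> (RM (Suc d) :: (('m::finite \<Rightarrow> 'a::field) \<Rightarrow> 'a) set)"
proof -
  have eq: "(\<lambda>x. f x * (x i - a)) = (\<lambda>x. f x * x i + (-a) * f x)" by (auto simp: algebra_simps)
  have "(\<lambda>x. (-a) * f x) \<in> (RM (Suc d) :: (('m \<Rightarrow> 'a) \<Rightarrow> 'a) set)"
    by (intro RM_smult RM_mono[OF _ assms]) simp
  hence "(\<lambda>x. f x * x i + (-a) * f x) \<in> (RM (Suc d) :: (('m \<Rightarrow> 'a) \<Rightarrow> 'a) set)"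
    by (rule RM_add[OF RM_mult_var[OF assms]])
  thus ?thesis by (simp only: eq)
qed

lemma RM_prod:
  assumes "finite S"
  shows "(\<lambda>x. \<Prod>y\<in>S. (x (I y) - a y)) \<in> (RM (card S) :: (('m::finite \<Rightarrow> 'a::field) \<Rightarrow> 'a) set)"
  using assms
proof (induction S rule: finite_induct)
  case empty
  then show ?case using RM_const[of 1] by simp
next
  case (insert y S)
  have "(\<lambda>x. \<Prod>y\<in>insert y S. (x (I y) - a y)) = (\<lambda>x. (\<Prod>y\<in>S. (x (I y) - a y)) * (x (I y) - a y))"
    using insert by (auto simp: mult.commute)
  then show ?case using RM_lin[OF insert.IH] insert by simp
qed

lemma mnm_line:
  fixes e :: "'m::finite \<Rightarrow> nat" and p h :: "'m \<Rightarrow> 'a::field"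
  shows "\<exists>Q. degree Q \<le> sum e UNIV \<and> (\<forall>s. mnm e (\<lambda>j. p j + s * h j) = poly Q (s::'a::field))"
proof (intro exI conjI allI)
  let ?Q = "\<Prod>j\<in>(UNIV::'m set). [:p j, h j:] ^ e j"
  show "mnm e (\<lambda>j. p j + s * h j) = poly ?Q s" for s
    by (simp add: mnm_def poly_prod poly_power algebra_simps)
  have "degree ?Q \<le> sum (degree \<circ> (\<lambda>j. [:p j, h j:] ^ e j)) UNIV"
    by (rule degree_prod_sum_le) simp
  also have "\<dots> \<le> sum e UNIV"
  proof (rule sum_mono)
    fix j
    have "degree ([:p j, h j:] ^ e j) \<le> degree [:p j, h j:] * e j" by (rule degree_power_le)
    also have "\<dots> \<le> 1 * e j" by (intro mult_right_mono) auto
    finally show "(degree \<circ> (\<lambda>j. [:p j, h j:] ^ e j)) j \<le> e j" by simp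
  qed
  finally show "degree ?Q \<le> sum e UNIV" .
qed

lemma dual_line:
  fixes T :: "'a::field set" and w :: "('m::finite \<Rightarrow> 'a) \<Rightarrow> 'a" and p h :: "'m \<Rightarrow> 'a"
  assumes "finite T" "card T = u + 2" "w \<in> RM u"
  shows "(\<Sum>s\<in>T. w (\<lambda>j. p j + s * h j) / (\<Prod>l\<in>T-{s}. s - l)) = 0"
proof -
  obtain c where c: "\<forall>x. w x = (\<Sum>e\<in>exponents u. c e * mnm e x)" using assms RM_iff by blast
  have "\<exists>Q. \<forall>e::'m\<Rightarrow>nat. degree (Q e) \<le> sum e UNIV \<and> (\<forall>s. mnm e (\<lambda>j. p j + s * h j) = poly (Q e) s)"
    using mnm_line[of _ p h] by metis
  then obtain Q where Q: "\<And>e::'m\<Rightarrow>nat. degree (Q e) \<le> sum e UNIV" "\<And>(e::'m\<Rightarrow>nat) s. mnm e (\<lambda>j. p j + s * h j) = poly (Q e) s"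
    by blast
  have "(\<Sum>s\<in>T. w (\<lambda>j. p j + s * h j) / (\<Prod>l\<in>T-{s}. s - l))
      = (\<Sum>s\<in>T. \<Sum>e\<in>exponents u. c e * (poly (Q e) s / (\<Prod>l\<in>T-{s}. s - l)))"
    by (simp add: c Q sum_divide_distrib)
  also have "\<dots> = (\<Sum>e\<in>exponents u. c e * (\<Sum>s\<in>T. poly (Q e) s / (\<Prod>l\<in>T-{s}. s - l)))"
    by (subst sum.swap) (simp add: sum_distrib_left)
  also have "\<dots> = 0"
  proof (intro sum.neutral ballI)
    fix e :: "'m \<Rightarrow> nat" assume "e \<in> exponents u"
    hence "degree (Q e) + 2 \<le> card T" using Q(1)[of e] assms by (auto simp: exponents_def)
    thus "c e * (\<Sum>s\<in>T. poly (Q e) s / (\<Prod>l\<in>T-{s}. s - l)) = 0"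
      using lagrange_zero[OF assms(1)] by simp
  qed
  finally show ?thesis .
qed

lemma weight_lb:
  fixes v :: "('m::finite \<Rightarrow> 'a::{field,finite}) \<Rightarrow> 'a"
  assumes "v \<in> dual_code (RM u)" "v \<noteq> (\<lambda>_. 0)"
  shows "u + 2 \<le> hweight v"
proof (rule ccontr)
  assume "\<not> ?thesis"
  hence cs: "card (supp v) \<le> u + 1" by (simp add: hweight_def)
  obtain x0 where x0: "v x0 \<noteq> 0" using assms(2) by auto
  define S where "S = supp v - {x0}"
  have finS: "finite S" by simp
  have "card S = card (supp v) - 1" unfolding S_def using x0 by (simp add: supp_def)
  hence cS: "card S \<le> u" using cs by simp
  have "\<forall>y\<in>S. \<exists>i. y i \<noteq> x0 i" unfolding S_def by (auto simp: fun_eq_iff)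
  then obtain I where I: "\<forall>y\<in>S. y (I y) \<noteq> x0 (I y)" by metis
  define w where "w x = (\<Prod>y\<in>S. (x (I y) - y (I y)))" for x
  have "w \<in> (RM (card S) :: (('m \<Rightarrow> 'a) \<Rightarrow> 'a) set)"
    unfolding w_def[abs_def] by (rule RM_prod[OF finS])
  hence wRM: "w \<in> RM u" by (rule RM_mono[OF cS])
  have w0: "w x0 \<noteq> 0" unfolding w_def using I finS by auto
  have wS: "w y = 0" if "y \<in> S" for y unfolding w_def using that finS by (auto intro!: prod_zero)
  have "(\<Sum>x\<in>UNIV. v x * w x) = v x0 * w x0 + (\<Sum>x\<in>UNIV-{x0}. v x * w x)"
    by (rule sum.remove) auto
  also have "(\<Sum>x\<in>UNIV-{x0}. v x * w x) = 0"
  proof (intro sum.neutral ballI)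
    fix x assume "x \<in> UNIV - {x0}"
    thus "v x * w x = 0" using wS by (cases "v x = 0") (auto simp: S_def supp_def)
  qed
  finally have "(\<Sum>x\<in>UNIV. v x * w x) \<noteq> 0" using x0 w0 by simp
  thus False using assms(1) wRM by (auto simp: dual_code_def)
qed

theorem mainTheorem2:
  fixes u :: nat
    and p h :: "'m::finite \<Rightarrow> 'a::{field,finite}"
    and t :: "nat \<Rightarrow> 'a"
  assumes "prime (card (UNIV :: 'a set))"
    and "u + 2 \<le> card (UNIV :: 'a set)"
    and "h \<noteq> (\<lambda>_. 0)"
    and "inj_on t {1..u+1}"
    and "\<forall>i\<in>{1..u+1}. t i \<noteq> 0"
  shows "\<exists>v \<in> dual_code (RM u :: (('m \<Rightarrow> 'a) \<Rightarrow> 'a) set).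
           hweight v = min_weight (dual_code (RM u :: (('m \<Rightarrow> 'a) \<Rightarrow> 'a) set)) \<and>
           supp v = insert p ((\<lambda>i. (\<lambda>j. p j + t i * h j)) ` {1..u+1})"
proof -
  define T where "T = insert 0 (t ` {1..u+1})"
  define L where "L s = (\<lambda>j. p j + s * h j)" for s
  define D where "D s = (\<Prod>l\<in>T-{s}. s - l)" for s
  define v where "v x = (\<Sum>s\<in>T. if x = L s then 1 / D s else 0)" for x
  obtain j0 where j0: "h j0 \<noteq> 0" using assms(3) by auto
  have injL: "inj L"
  proof (rule injI)
    fix s s' assume "L s = L s'"
    hence "p j0 + s * h j0 = p j0 + s' * h j0" unfolding L_def by metis
    thus "s = s'" using j0 by simp
  qed
  have finT: "finite T" by (simp add: T_def)
  have cardT: "card T = u + 2"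
  proof -
    have "0 \<notin> t ` {1..u+1}" using assms(5) by auto
    moreover have "card (t ` {1..u+1}) = u + 1" using card_image[OF assms(4)] by simp
    ultimately show ?thesis by (simp add: T_def)
  qed
  have D0: "D s \<noteq> 0" if "s \<in> T" for s unfolding D_def using finT by auto
  have vL: "v (L s) = 1 / D s" if "s \<in> T" for s
  proof -
    have "v (L s) = (\<Sum>s'\<in>T. if s' = s then 1 / D s' else 0)"
      unfolding v_def using injL by (intro sum.cong refl) (auto dest: injD)
    also have "\<dots> = 1 / D s" using that finT by simp
    finally show ?thesis .
  qed
  have vout: "v x = 0" if "x \<notin> L ` T" for x
    unfolding v_def using that by (intro sum.neutral) auto
  have suppv: "supp v = L ` T"
    using vL vout D0 by (auto simp: supp_def)
  have hv: "hweight v = u + 2"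
    unfolding hweight_def suppv using card_image[OF inj_on_subset[OF injL]] cardT by simp
  have vdual: "v \<in> dual_code (RM u :: (('m \<Rightarrow> 'a) \<Rightarrow> 'a) set)"
    unfolding dual_code_def
  proof (intro CollectI ballI)
    fix w :: "('m \<Rightarrow> 'a) \<Rightarrow> 'a" assume w: "w \<in> RM u"
    have "(\<Sum>x\<in>UNIV. v x * w x) = (\<Sum>x\<in>UNIV. \<Sum>s\<in>T. if x = L s then w (L s) / D s else 0)"
      unfolding v_def sum_distrib_right by (intro sum.cong refl) auto
    also have "\<dots> = (\<Sum>s\<in>T. \<Sum>x\<in>UNIV. if x = L s then w (L s) / D s else 0)"
      by (rule sum.swap)
    also have "\<dots> = (\<Sum>s\<in>T. w (L s) / D s)" by simp
    also have "\<dots> = 0" unfolding L_def D_def by (rule dual_line[OF finT cardT w])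
    finally show "(\<Sum>x\<in>UNIV. v x * w x) = 0" .
  qed
  have vnz: "v \<noteq> (\<lambda>_. 0)" using suppv finT cardT by (auto simp: supp_def)
  have mw: "min_weight (dual_code (RM u :: (('m \<Rightarrow> 'a) \<Rightarrow> 'a) set)) = u + 2"
    unfolding min_weight_def
  proof (rule Min_eqI)
    show "finite {hweight v |v. v \<in> dual_code (RM u :: (('m \<Rightarrow> 'a) \<Rightarrow> 'a) set) \<and> v \<noteq> (\<lambda>_. 0)}"
      by (rule finite_subset[of _ "hweight ` UNIV"]) auto
    show "u + 2 \<in> {hweight v |v. v \<in> dual_code (RM u :: (('m \<Rightarrow> 'a) \<Rightarrow> 'a) set) \<and> v \<noteq> (\<lambda>_. 0)}"
      using vdual vnz hv by (auto intro!: exI[of _ v])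
  qed (use weight_lb in fastforce)
  have "L ` T = insert p ((\<lambda>i. (\<lambda>j. p j + t i * h j)) ` {1..u+1})"
    by (simp add: T_def L_def image_image)
  thus ?thesis using vdual hv mw suppv by (intro bexI[of _ v]) auto
qed

end
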